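(* Let $p$ be a prime and $k$ a field of characteristic $p$. Then $R_1^{(p)}\neq L_1$.
   Context: $X=\{x_1,x_2,\ldots\}$ is a countably infinite set and $k_0\langle X\rangle$ is the free associative $k$-algebra (without identity) on $X$. A $T$-space is a $k$-linear subspace closed under every algebra endomorphism of $k_0\langle X\rangle$; the $T$-space generated by a subset is the smallest $T$-space containing it. $S_p(v_1,\ldots,v_p)=\sum_{\sigma\in\Sigma_p}\prod_{i=1}^p v_{\sigma(i)}$; $R_1^{(p)}$ is the $T$-space generated by $S_p(x_1,\ldots,x_p)$, and $L_1$ is the $T$-space generated by $x_1^p$. *)

theory Defs
  imports Main "HOL-Computational_Algebra.Primes" "HOL-Library.Function_Algebras" "HOL-Combinatorics.Permutations"
begin

text \<open>The free associative k-algebra without identity k_0<X> on X = {x_0, x_1, ...}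
  (variables indexed by nat, x_i is the one-letter word [i]).\<close>

definition FA :: "(nat list \<Rightarrow> 'k::field) set" where
  "FA = {f. finite {w. f w \<noteq> 0} \<and> f [] = 0}"

definition fa_mul :: "(nat list \<Rightarrow> 'k::field) \<Rightarrow> (nat list \<Rightarrow> 'k) \<Rightarrow> (nat list \<Rightarrow> 'k)" where
  "fa_mul f g = (\<lambda>w. \<Sum>i\<le>length w. f (take i w) * g (drop i w))"

definition fa_smult :: "'k::field \<Rightarrow> (nat list \<Rightarrow> 'k) \<Rightarrow> (nat list \<Rightarrow> 'k)" where
  "fa_smult c f = (\<lambda>w. c * f w)"

definition fa_var :: "nat \<Rightarrow> (nat list \<Rightarrow> 'k::field)" where
  "fa_var i = (\<lambda>w. if w = [i] then 1 else 0)"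

fun fa_prod :: "(nat list \<Rightarrow> 'k::field) list \<Rightarrow> (nat list \<Rightarrow> 'k)" where
  "fa_prod [] = 0"
| "fa_prod [f] = f"
| "fa_prod (f # g # fs) = fa_mul f (fa_prod (g # fs))"

definition fa_endo :: "((nat list \<Rightarrow> 'k::field) \<Rightarrow> (nat list \<Rightarrow> 'k)) \<Rightarrow> bool" where
  "fa_endo \<phi> \<longleftrightarrow>
     (\<forall>f\<in>FA. \<phi> f \<in> FA) \<and>
     (\<forall>f\<in>FA. \<forall>g\<in>FA. \<phi> (f + g) = \<phi> f + \<phi> g) \<and>
     (\<forall>c. \<forall>f\<in>FA. \<phi> (fa_smult c f) = fa_smult c (\<phi> f)) \<and>
     (\<forall>f\<in>FA. \<forall>g\<in>FA. \<phi> (fa_mul f g) = fa_mul (\<phi> f) (\<phi> g))"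

definition fa_subspace :: "(nat list \<Rightarrow> 'k::field) set \<Rightarrow> bool" where
  "fa_subspace V \<longleftrightarrow> V \<subseteq> FA \<and> 0 \<in> V \<and>
     (\<forall>f\<in>V. \<forall>g\<in>V. f + g \<in> V) \<and> (\<forall>c. \<forall>f\<in>V. fa_smult c f \<in> V)"

definition T_space :: "(nat list \<Rightarrow> 'k::field) set \<Rightarrow> bool" where
  "T_space V \<longleftrightarrow> fa_subspace V \<and> (\<forall>\<phi>. fa_endo \<phi> \<longrightarrow> (\<forall>f\<in>V. \<phi> f \<in> V))"

definition T_gen :: "(nat list \<Rightarrow> 'k::field) set \<Rightarrow> (nat list \<Rightarrow> 'k) set" where
  "T_gen S = \<Inter>{V. T_space V \<and> S \<subseteq> V}"

text \<open>S_p(v_1,...,v_p) = sum over permutations of products (indices shifted to 0..p-1).\<close>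
definition S_poly :: "nat \<Rightarrow> (nat \<Rightarrow> (nat list \<Rightarrow> 'k::field)) \<Rightarrow> (nat list \<Rightarrow> 'k)" where
  "S_poly p v = (\<Sum>\<sigma>\<in>{\<sigma>. \<sigma> permutes {0..<p}}. fa_prod (map (\<lambda>i. v (\<sigma> i)) [0..<p]))"

definition R1 :: "nat \<Rightarrow> (nat list \<Rightarrow> 'k::field) set" where
  "R1 p = T_gen {S_poly p fa_var}"

definition L1 :: "nat \<Rightarrow> (nat list \<Rightarrow> 'k::field) set" where
  "L1 p = T_gen {fa_prod (replicate p (fa_var 0))}"

end

theory Submission
  imports Defs
begin

lemma fa_mul_FA:
  assumes f: "f \<in> FA" and g: "g \<in> FA"
  shows "fa_mul f g \<in> FA"
proof -
  let ?Sf = "{w. f w \<noteq> 0}" and ?Sg = "{w. g w \<noteq> 0}"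
  have "{w. fa_mul f g w \<noteq> 0} \<subseteq> (\<lambda>(a,b). a @ b) ` (?Sf \<times> ?Sg)"
  proof
    fix w assume "w \<in> {w. fa_mul f g w \<noteq> 0}"
    then have "(\<Sum>i\<le>length w. f (take i w) * g (drop i w)) \<noteq> 0"
      by (simp add: fa_mul_def)
    then obtain i where "f (take i w) * g (drop i w) \<noteq> 0"
      by (meson sum.neutral)
    then have "(take i w, drop i w) \<in> ?Sf \<times> ?Sg" by auto
    then show "w \<in> (\<lambda>(a,b). a @ b) ` (?Sf \<times> ?Sg)"
      by (metis (no_types, lifting) append_take_drop_id case_prod_conv image_eqI)
  qed
  moreover have "finite ((\<lambda>(a,b). a @ b) ` (?Sf \<times> ?Sg))"
    using f g by (auto simp: FA_def)
  ultimately have "finite {w. fa_mul f g w \<noteq> 0}" by (rule finite_subset)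
  moreover have "fa_mul f g [] = 0" using f by (simp add: fa_mul_def FA_def)
  ultimately show ?thesis by (simp add: FA_def)
qed

lemma zero_FA: "(0 :: nat list \<Rightarrow> 'k::field) \<in> FA"
  by (simp add: FA_def)

lemma add_FA: "f \<in> FA \<Longrightarrow> g \<in> FA \<Longrightarrow> f + g \<in> FA"
proof -
  assume f: "f \<in> FA" and g: "g \<in> FA"
  have "{w. (f+g) w \<noteq> 0} \<subseteq> {w. f w \<noteq> 0} \<union> {w. g w \<noteq> 0}" by auto
  moreover have "finite ({w. f w \<noteq> 0} \<union> {w. g w \<noteq> 0})" using f g by (simp add: FA_def)
  ultimately show ?thesis using f g by (auto simp: FA_def intro: finite_subset)
qed

lemma var_FA: "(fa_var i :: nat list \<Rightarrow> 'k::field) \<in> FA"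
proof -
  have "{w. (fa_var i :: nat list \<Rightarrow> 'k) w \<noteq> 0} \<subseteq> {[i]}" by (auto simp: fa_var_def)
  then show ?thesis by (auto simp: FA_def fa_var_def intro: finite_subset)
qed

lemma prod_FA: "\<forall>u\<in>set us. u \<in> FA \<Longrightarrow> fa_prod us \<in> FA"
  by (induction us rule: fa_prod.induct) (auto simp: zero_FA fa_mul_FA)

lemma endo_zero:
  assumes "fa_endo \<phi>" shows "\<phi> 0 = 0"
proof -
  have "\<phi> (0 + 0) = \<phi> 0 + \<phi> 0" using assms zero_FA unfolding fa_endo_def by blast
  then show ?thesis by simp
qed

lemma endo_prod:
  assumes "fa_endo \<phi>" "\<forall>u\<in>set us. u \<in> FA"
  shows "\<phi> (fa_prod us) = fa_prod (map \<phi> us)"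
  using assms(2)
proof (induction us rule: fa_prod.induct)
  case 1 then show ?case by (simp only: fa_prod.simps list.map) (rule endo_zero[OF assms(1)])
next
  case (2 f) then show ?case by simp
next
  case (3 f g fs)
  have "fa_prod (g # fs) \<in> FA" using 3(2) prod_FA[of "g#fs"] by simp
  then have "\<phi> (fa_prod (f # g # fs)) = fa_mul (\<phi> f) (\<phi> (fa_prod (g # fs)))"
    using assms(1) 3 unfolding fa_endo_def by simp
  then show ?case using 3 by simp
qed

lemma sum_FA: "\<forall>a\<in>A. F a \<in> FA \<Longrightarrow> (\<Sum>a\<in>A. F a) \<in> FA"
  by (induction A rule: infinite_finite_induct) (auto simp: zero_FA add_FA)

lemma endo_sum:
  assumes "fa_endo \<phi>" "finite A" "\<forall>a\<in>A. F a \<in> FA"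
  shows "\<phi> (\<Sum>a\<in>A. F a) = (\<Sum>a\<in>A. \<phi> (F a))"
  using assms(2,3)
proof (induction A rule: finite_induct)
  case empty then show ?case by (simp only: sum.empty) (rule endo_zero[OF assms(1)])
next
  case (insert x A)
  have s: "(\<Sum>a\<in>A. F a) \<in> FA"
    using insert(4) sum_FA[of A F] by simp
  have "\<phi> (F x + sum F A) = \<phi> (F x) + \<phi> (sum F A)"
    using insert s assms(1) unfolding fa_endo_def by blast
  moreover have "\<phi> (sum F A) = (\<Sum>a\<in>A. \<phi> (F a))" using insert by simp
  moreover have "sum F (insert x A) = F x + sum F A" using insert(1,2) by (rule sum.insert)
  moreover have "(\<Sum>a\<in>insert x A. \<phi> (F a)) = \<phi> (F x) + (\<Sum>a\<in>A. \<phi> (F a))" using insert(1,2) by (rule sum.insert)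
  ultimately show ?case by metis
qed

lemma prod_short:
  "\<forall>u\<in>set us. u [] = 0 \<Longrightarrow> length w < length us \<Longrightarrow> fa_prod us w = 0"
proof (induction us arbitrary: w rule: fa_prod.induct)
  case 1 then show ?case by simp
next
  case (2 f) then show ?case by simp
next
  case (3 f g fs)
  have "\<And>i. f (take i w) * fa_prod (g # fs) (drop i w) = 0"
  proof -
    fix i
    show "f (take i w) * fa_prod (g # fs) (drop i w) = 0"
    proof (cases "i = 0")
      case True then show ?thesis using 3(2) by simp
    next
      case False
      then have "length (drop i w) < length (g # fs)" using 3(3) by simp
      then show ?thesis using 3 by simp
    qed
  qed
  then show ?case by (simp only: fa_prod.simps fa_mul_def sum.neutral_const)
qed

lemma prod_rep:
  "\<forall>u\<in>set us. u [] = 0 \<Longrightarrow> us \<noteq> [] \<Longrightarrow>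
    fa_prod us (replicate (length us) a) = prod_list (map (\<lambda>u. u [a]) us)"
proof (induction us rule: fa_prod.induct)
  case 1 then show ?case by simp
next
  case (2 f) then show ?case by simp
next
  case (3 f g fs)
  define w where "w = replicate (Suc (Suc (length fs))) a"
  define T where "T i = f (take i w) * fa_prod (g # fs) (drop i w)" for i
  have "fa_prod (f # g # fs) (replicate (length (f # g # fs)) a) = (\<Sum>i\<le>Suc (Suc (length fs)). T i)"
    by (simp add: fa_mul_def T_def w_def)
  also have "\<dots> = T 0 + (T 1 + (\<Sum>i\<le>length fs. T (Suc (Suc i))))"
    by (simp only: sum.atMost_Suc_shift One_nat_def)
  also have "T 0 = 0" using 3(2) by (simp add: T_def)
  also have "T 1 = f [a] * prod_list (map (\<lambda>u. u [a]) (g # fs))"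
  proof -
    have "drop 1 w = replicate (length (g # fs)) a" by (simp add: w_def)
    then show ?thesis using 3 by (simp add: T_def w_def)
  qed
  also have "(\<Sum>i\<le>length fs. T (Suc (Suc i))) = 0"
  proof (rule sum.neutral, rule ballI)
    fix i assume "i \<in> {..length fs}"
    have "length (drop (Suc (Suc i)) w) < length (g # fs)" by (simp add: w_def)
    then show "T (Suc (Suc i)) = 0" using prod_short[of "g # fs"] 3(2) by (simp add: T_def)
  qed
  finally show ?case by simp
qed

lemma sum_app: "(\<Sum>a\<in>A. (F a :: nat list \<Rightarrow> 'k::field)) w = (\<Sum>a\<in>A. F a w)"
  by (induction A rule: infinite_finite_induct) auto

lemma prod_list_upt: "prod_list (map f [0..<n]) = (\<Prod>i\<in>{0..<n}. (f i :: 'a::comm_monoid_mult))"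
  by (induction n) auto

lemma smult_FA: "f \<in> FA \<Longrightarrow> fa_smult c f \<in> FA"
proof -
  assume f: "f \<in> FA"
  have "{w. fa_smult c f w \<noteq> 0} \<subseteq> {w. f w \<noteq> 0}" by (auto simp: fa_smult_def)
  then show ?thesis using f by (auto simp: FA_def fa_smult_def intro: finite_subset)
qed

lemma endo_comp: "fa_endo \<phi> \<Longrightarrow> fa_endo \<psi> \<Longrightarrow> fa_endo (\<phi> \<circ> \<psi>)"
  unfolding fa_endo_def comp_def by (simp add: add_FA smult_FA fa_mul_FA)

lemma endo_id: "fa_endo id"
  unfolding fa_endo_def by simp

lemma endo_FA: "fa_endo \<phi> \<Longrightarrow> f \<in> FA \<Longrightarrow> \<phi> f \<in> FA"
  unfolding fa_endo_def by blast
lemma endo_add: "fa_endo \<phi> \<Longrightarrow> f \<in> FA \<Longrightarrow> g \<in> FA \<Longrightarrow> \<phi> (f + g) = \<phi> f + \<phi> g"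
  unfolding fa_endo_def by blast
lemma endo_smult: "fa_endo \<phi> \<Longrightarrow> f \<in> FA \<Longrightarrow> \<phi> (fa_smult c f) = fa_smult c (\<phi> f)"
  unfolding fa_endo_def by blast

theorem proposition5p1:
  fixes p :: nat
  assumes "prime p" and "CHAR('k::field) = p"
  shows "(R1 p :: (nat list \<Rightarrow> 'k) set) \<noteq> L1 p"
proof
  assume eq: "(R1 p :: (nat list \<Rightarrow> 'k) set) = L1 p"
  have p0: "p \<noteq> 0" using assms(1) by auto
  define V :: "(nat list \<Rightarrow> 'k) set" where
    "V = {f \<in> FA. \<forall>\<phi>. fa_endo \<phi> \<longrightarrow> \<phi> f (replicate p 0) = 0}"
  have TV: "T_space V"
    unfolding T_space_def fa_subspace_def
  proof (intro conjI ballI allI impI)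
    show "V \<subseteq> FA" by (auto simp: V_def)
    have "\<forall>\<phi>. fa_endo \<phi> \<longrightarrow> \<phi> (0 :: nat list \<Rightarrow> 'k) (replicate p 0) = 0"
    proof (intro allI impI)
      fix \<phi> :: "(nat list \<Rightarrow> 'k) \<Rightarrow> _" assume e: "fa_endo \<phi>"
      show "\<phi> 0 (replicate p 0) = 0" using endo_zero[OF e] by simp
    qed
    then show "0 \<in> V" unfolding V_def using zero_FA by blast
  next
    fix f g assume f: "f \<in> V" and g: "g \<in> V"
    have fg: "f \<in> FA" "g \<in> FA" using f g unfolding V_def by auto
    have "\<forall>\<phi>. fa_endo \<phi> \<longrightarrow> \<phi> (f + g) (replicate p 0) = 0"
    proof (intro allI impI)
      fix \<phi> :: "(nat list \<Rightarrow> 'k) \<Rightarrow> _" assume e: "fa_endo \<phi>"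
      have "\<phi> (f + g) = \<phi> f + \<phi> g" by (rule endo_add[OF e fg])
      moreover have "\<phi> f (replicate p 0) = 0" "\<phi> g (replicate p 0) = 0"
        using f g e unfolding V_def by blast+
      ultimately show "\<phi> (f + g) (replicate p 0) = 0" by simp
    qed
    then show "f + g \<in> V" using add_FA[OF fg] unfolding V_def by blast
  next
    fix c and f assume f: "f \<in> V"
    have fF: "f \<in> FA" using f unfolding V_def by auto
    have "\<forall>\<phi>. fa_endo \<phi> \<longrightarrow> \<phi> (fa_smult c f) (replicate p 0) = 0"
    proof (intro allI impI)
      fix \<phi> :: "(nat list \<Rightarrow> 'k) \<Rightarrow> _" assume e: "fa_endo \<phi>"
      have "\<phi> (fa_smult c f) = fa_smult c (\<phi> f)" by (rule endo_smult[OF e fF])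
      moreover have "\<phi> f (replicate p 0) = 0" using f e unfolding V_def by blast
      ultimately show "\<phi> (fa_smult c f) (replicate p 0) = 0" by (simp add: fa_smult_def)
    qed
    then show "fa_smult c f \<in> V" using smult_FA[OF fF] unfolding V_def by blast
  next
    fix \<psi> :: "(nat list \<Rightarrow> 'k) \<Rightarrow> _" and f assume e: "fa_endo \<psi>" and f: "f \<in> V"
    have "f \<in> FA" using f unfolding V_def by blast
    then have "\<psi> f \<in> FA" by (rule endo_FA[OF e])
    moreover have "\<forall>\<phi>. fa_endo \<phi> \<longrightarrow> \<phi> (\<psi> f) (replicate p 0) = 0"
    proof (intro allI impI)
      fix \<phi> :: "(nat list \<Rightarrow> 'k) \<Rightarrow> _" assume "fa_endo \<phi>"
      then have "fa_endo (\<phi> \<circ> \<psi>)" using e endo_comp by blast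
      then show "\<phi> (\<psi> f) (replicate p 0) = 0" using f unfolding V_def comp_def by blast
    qed
    ultimately show "\<psi> f \<in> V" unfolding V_def by simp
  qed
  have SV: "(S_poly p fa_var :: nat list \<Rightarrow> 'k) \<in> V"
  proof -
    let ?P = "{\<sigma>. \<sigma> permutes {0..<p}}"
    have fin: "finite ?P" by (simp add: finite_permutations)
    have memb: "\<forall>\<sigma>\<in>?P. fa_prod (map (\<lambda>i. (fa_var (\<sigma> i) :: nat list \<Rightarrow> 'k)) [0..<p]) \<in> FA"
      by (auto intro!: prod_FA simp: var_FA)
    have "(S_poly p fa_var :: nat list \<Rightarrow> 'k) \<in> FA" unfolding S_poly_def by (rule sum_FA[OF memb])
    moreover have "\<phi> (S_poly p fa_var :: nat list \<Rightarrow> 'k) (replicate p 0) = 0" if e: "fa_endo \<phi>" for \<phi> :: "(nat list \<Rightarrow> 'k) \<Rightarrow> nat list \<Rightarrow> 'k"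
    proof -
      define u where "u i = \<phi> (fa_var i :: nat list \<Rightarrow> 'k)" for i
      have uFA: "u i \<in> FA" for i unfolding u_def by (rule endo_FA[OF e var_FA])
      then have u0: "u i [] = 0" for i by (simp add: FA_def)
      have "\<phi> (S_poly p fa_var) = (\<Sum>\<sigma>\<in>?P. \<phi> (fa_prod (map (\<lambda>i. fa_var (\<sigma> i)) [0..<p])))"
        unfolding S_poly_def using endo_sum[OF e fin memb] .
      also have "\<dots> = (\<Sum>\<sigma>\<in>?P. fa_prod (map (\<lambda>i. u (\<sigma> i)) [0..<p]))"
        by (rule sum.cong) (auto simp: endo_prod[OF e] var_FA u_def comp_def)
      finally have "\<phi> (S_poly p fa_var) (replicate p 0) =
          (\<Sum>\<sigma>\<in>?P. fa_prod (map (\<lambda>i. u (\<sigma> i)) [0..<p]) (replicate p 0))"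
        by (simp add: sum_app)
      also have "\<dots> = (\<Sum>\<sigma>\<in>?P. \<Prod>i\<in>{0..<p}. u i [0])"
      proof (rule sum.cong)
        fix \<sigma> assume s: "\<sigma> \<in> ?P"
        have "fa_prod (map (\<lambda>i. u (\<sigma> i)) [0..<p]) (replicate p 0)
            = prod_list (map (\<lambda>v. v [0]) (map (\<lambda>i. u (\<sigma> i)) [0..<p]))"
          using prod_rep[of "map (\<lambda>i. u (\<sigma> i)) [0..<p]" 0] p0 u0 by simp
        also have "\<dots> = (\<Prod>i\<in>{0..<p}. u (\<sigma> i) [0])"
          by (simp add: prod_list_upt comp_def)
        also have "\<dots> = (\<Prod>i\<in>{0..<p}. u i [0])"
          using prod.permute[of \<sigma> "{0..<p}" "\<lambda>i. u i [0]"] s by (simp add: comp_def)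
        finally show "fa_prod (map (\<lambda>i. u (\<sigma> i)) [0..<p]) (replicate p 0) = (\<Prod>i\<in>{0..<p}. u i [0])" .
      qed simp
      also have "\<dots> = of_nat (fact p) * (\<Prod>i\<in>{0..<p}. u i [0])"
        using card_permutations[of "{0..<p}" p] by simp
      also have "(of_nat (fact p) :: 'k) = 0"
        using assms(2) dvd_fact[of p p] p0 by (simp add: of_nat_eq_0_iff_char_dvd)
      finally show ?thesis by simp
    qed
    ultimately show ?thesis unfolding V_def by blast
  qed
  have "R1 p \<subseteq> V" unfolding R1_def T_gen_def using TV SV by blast
  moreover have "(fa_prod (replicate p (fa_var 0)) :: nat list \<Rightarrow> 'k) \<in> L1 p"
    unfolding L1_def T_gen_def by blast
  ultimately have "(fa_prod (replicate p (fa_var 0)) :: nat list \<Rightarrow> 'k) \<in> V" using eq by blast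
  then have "id (fa_prod (replicate p (fa_var 0)) :: nat list \<Rightarrow> 'k) (replicate p 0) = 0"
    unfolding V_def using endo_id by blast
  moreover have "(fa_prod (replicate p (fa_var 0)) :: nat list \<Rightarrow> 'k) (replicate p 0) = 1"
    using prod_rep[of "replicate p (fa_var 0) :: (nat list \<Rightarrow> 'k) list" 0] p0
    by (simp add: fa_var_def)
  ultimately show False by simp
qed

end
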